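(* Let $k$ be a field of characteristic $0$ containing a primitive fifth root of unity, let $a,b\in k$ be such that the threefold $xu^2+2yuv+zv^2+2z^2u+2x^2v+ay^3+bxyz=0$ in $\mathbb{P}^4$ is smooth, and let $\mathcal{D}_{a,b}$ be the genus four curve with affine model $$(T_1-2)(T_1^2+T_1-1)^2+(a+b+4-10T_1+5T_1^3)w^2+(-2-b+5T_1)w^4=0,$$ with the degree four map $\mathcal{D}_{a,b}\to\mathbb{P}^1$, $(T_1,w)\mapsto T_1$. Assume this map is not a Galois cover and let $\widetilde{\mathcal{D}}_{a,b}\to\mathbb{P}^1$ be its Galois closure (normalization). Then the double cover $\widetilde{\mathcal{D}}_{a,b}\to\mathcal{D}_{a,b}$ is given by the function field extension $k(\widetilde{\mathcal{D}}_{a,b})=k(\mathcal{D}_{a,b})(t)$ with $$t^2=\frac{T_1-2}{5T_1-b-2}.$$ *)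

theory Defs
  imports "HOL-Computational_Algebra.Polynomial"
begin

definition subfield :: "'a::field set \<Rightarrow> bool" where
  "subfield S \<longleftrightarrow> 0 \<in> S \<and> 1 \<in> S \<and>
     (\<forall>x\<in>S. \<forall>y\<in>S. x + y \<in> S \<and> x - y \<in> S \<and> x * y \<in> S) \<and>
     (\<forall>x\<in>S. inverse x \<in> S)"

definition gen_field :: "'a::field set \<Rightarrow> 'a set" where
  "gen_field X = \<Inter>{S. subfield S \<and> X \<subseteq> S}"

definition embedding_over :: "'a::field set \<Rightarrow> 'a set \<Rightarrow> ('a \<Rightarrow> 'a) \<Rightarrow> bool" where
  "embedding_over F K \<sigma> \<longleftrightarrow> (\<forall>x\<in>F. \<sigma> x = x) \<and> \<sigma> 1 = 1 \<and>
     (\<forall>x\<in>K. \<forall>y\<in>K. \<sigma> (x + y) = \<sigma> x + \<sigma> y \<and> \<sigma> (x * y) = \<sigma> x * \<sigma> y)"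

text \<open>Galois (normal) closure of K/F inside the ambient algebraically closed field:
  the compositum of all conjugates of K over F.\<close>
definition galois_closure :: "'a::field set \<Rightarrow> 'a set \<Rightarrow> 'a set" where
  "galois_closure F K = gen_field (\<Union>{\<sigma> ` K | \<sigma>. embedding_over F K \<sigma>})"

text \<open>K/F is Galois (char 0, so separable): every F-embedding maps K into K.\<close>
definition galois_ext :: "'a::field set \<Rightarrow> 'a set \<Rightarrow> bool" where
  "galois_ext F K \<longleftrightarrow> (\<forall>\<sigma>. embedding_over F K \<sigma> \<longrightarrow> \<sigma> ` K \<subseteq> K)"

definition transcendental_over :: "'a::field set \<Rightarrow> 'a \<Rightarrow> bool" where
  "transcendental_over F x \<longleftrightarrow>
     (\<forall>p. p \<noteq> 0 \<longrightarrow> (\<forall>i. coeff p i \<in> F) \<longrightarrow> poly p x \<noteq> 0)"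

text \<open>The cubic threefold x u^2 + 2 y u v + z v^2 + 2 z^2 u + 2 x^2 v + a y^3 + b x y z = 0
  and its partial derivatives (written out).\<close>
definition cubicF :: "'a::field \<Rightarrow> 'a \<Rightarrow> 'a \<Rightarrow> 'a \<Rightarrow> 'a \<Rightarrow> 'a \<Rightarrow> 'a \<Rightarrow> 'a" where
  "cubicF a b x y z u v = x*u^2 + 2*y*u*v + z*v^2 + 2*z^2*u + 2*x^2*v + a*y^3 + b*x*y*z"

definition smooth_threefold :: "'a::field \<Rightarrow> 'a \<Rightarrow> bool" where
  "smooth_threefold a b \<longleftrightarrow>
     \<not> (\<exists>x y z u v. (x, y, z, u, v) \<noteq> (0, 0, 0, 0, 0) \<and>
          cubicF a b x y z u v = 0 \<and>
          u^2 + 4*x*v + b*y*z = 0 \<and>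
          2*u*v + 3*a*y^2 + b*x*z = 0 \<and>
          v^2 + 4*z*u + b*x*y = 0 \<and>
          2*x*u + 2*y*v + 2*z^2 = 0 \<and>
          2*y*u + 2*z*v + 2*x^2 = 0)"

definition curveD :: "'a::field \<Rightarrow> 'a \<Rightarrow> 'a \<Rightarrow> 'a \<Rightarrow> 'a" where
  "curveD a b T1 w = (T1 - 2) * (T1^2 + T1 - 1)^2 + (a + b + 4 - 10*T1 + 5*T1^3) * w^2
                     + (-2 - b + 5*T1) * w^4"

end

theory Submission
  imports Defs
begin

lemma subfield_UNIV: "subfield (UNIV :: 'a::field set)"
  by (simp add: subfield_def)

lemma gen_field_subfield: "subfield (gen_field X)"
  unfolding gen_field_def subfield_def by blast

lemma gen_field_sup: "X \<subseteq> gen_field X"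
  unfolding gen_field_def by blast

lemma gen_field_min: "subfield S \<Longrightarrow> X \<subseteq> S \<Longrightarrow> gen_field X \<subseteq> S"
  unfolding gen_field_def by blast

lemma sf_0: "subfield S \<Longrightarrow> 0 \<in> S" by (simp add: subfield_def)
lemma sf_1: "subfield S \<Longrightarrow> 1 \<in> S" by (simp add: subfield_def)
lemma sf_add: "subfield S \<Longrightarrow> x \<in> S \<Longrightarrow> y \<in> S \<Longrightarrow> x + y \<in> S" by (simp add: subfield_def)
lemma sf_diff: "subfield S \<Longrightarrow> x \<in> S \<Longrightarrow> y \<in> S \<Longrightarrow> x - y \<in> S" by (simp add: subfield_def)
lemma sf_mult: "subfield S \<Longrightarrow> x \<in> S \<Longrightarrow> y \<in> S \<Longrightarrow> x * y \<in> S" by (simp add: subfield_def)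
lemma sf_inv: "subfield S \<Longrightarrow> x \<in> S \<Longrightarrow> inverse x \<in> S" by (simp add: subfield_def)
lemma sf_uminus: "subfield S \<Longrightarrow> x \<in> S \<Longrightarrow> - x \<in> S"
  by (metis diff_0 sf_diff sf_0)
lemma sf_divide: "subfield S \<Longrightarrow> x \<in> S \<Longrightarrow> y \<in> S \<Longrightarrow> x / y \<in> S"
  by (simp add: divide_inverse sf_mult sf_inv)
lemma sf_power: "subfield S \<Longrightarrow> x \<in> S \<Longrightarrow> x ^ n \<in> S"
  by (induction n) (auto intro: sf_1 sf_mult)
lemma sf_numeral: "subfield S \<Longrightarrow> (numeral n :: 'a::field) \<in> S"
proof (induction n rule: num_induct)
  case One then show ?case by (simp add: sf_1)
next
  case (inc n) then show ?case by (metis numeral_inc sf_add sf_1)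
qed

lemmas sf_all = sf_0 sf_1 sf_add sf_diff sf_mult sf_uminus sf_power sf_numeral

lemma emb_0: assumes "embedding_over F K \<sigma>" "subfield K" shows "\<sigma> 0 = 0"
proof -
  have "\<sigma> (0 + 0) = \<sigma> 0 + \<sigma> 0" using assms sf_0[OF assms(2)] unfolding embedding_over_def by blast
  then show ?thesis by (metis add_0 add_cancel_right_right)
qed

lemma emb_uminus: assumes "embedding_over F K \<sigma>" "subfield K" "y \<in> K" shows "\<sigma> (- y) = - \<sigma> y"
proof -
  have "-y \<in> K" using sf_uminus assms by blast
  then have "\<sigma> (y + - y) = \<sigma> y + \<sigma> (-y)" using assms unfolding embedding_over_def by blast
  then show ?thesis using emb_0[OF assms(1,2)] by (simp add: eq_neg_iff_add_eq_0 add.commute)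
qed

lemma emb_diff: assumes "embedding_over F K \<sigma>" "subfield K" "x \<in> K" "y \<in> K"
  shows "\<sigma> (x - y) = \<sigma> x - \<sigma> y"
proof -
  have "-y \<in> K" using sf_uminus assms by blast
  then have "\<sigma> (x + - y) = \<sigma> x + \<sigma> (-y)" using assms unfolding embedding_over_def by blast
  then show ?thesis using emb_uminus[OF assms(1,2,4)] by simp
qed

lemma emb_inv: assumes "embedding_over F K \<sigma>" "subfield K" "x \<in> K"
  shows "\<sigma> (inverse x) = inverse (\<sigma> x)"
proof (cases "x = 0")
  case True then show ?thesis using emb_0[OF assms(1,2)] by simp
next
  case False
  have "inverse x \<in> K" using sf_inv assms by blast
  then have "\<sigma> (x * inverse x) = \<sigma> x * \<sigma> (inverse x)" using assms unfolding embedding_over_def by blast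
  then have "\<sigma> x * \<sigma> (inverse x) = 1" using False assms(1) unfolding embedding_over_def by simp
  then show ?thesis by (metis inverse_unique)
qed

lemma emb_into:
  assumes e: "embedding_over F (gen_field X) \<sigma>" and N: "subfield N" and X: "\<forall>x\<in>X. \<sigma> x \<in> N"
  shows "\<sigma> ` gen_field X \<subseteq> N"
proof -
  let ?K = "gen_field X"
  have K: "subfield ?K" by (rule gen_field_subfield)
  define S where "S = {x \<in> ?K. \<sigma> x \<in> N}"
  have "subfield S"
    unfolding subfield_def S_def
  proof (intro conjI ballI)
    show "0 \<in> {x \<in> ?K. \<sigma> x \<in> N}" using emb_0[OF e K] sf_0[OF K] sf_0[OF N] by simp
    show "1 \<in> {x \<in> ?K. \<sigma> x \<in> N}" using e sf_1[OF K] sf_1[OF N] unfolding embedding_over_def by simp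
    fix x y assume x: "x \<in> {x \<in> ?K. \<sigma> x \<in> N}" and y: "y \<in> {x \<in> ?K. \<sigma> x \<in> N}"
    show "x + y \<in> {x \<in> ?K. \<sigma> x \<in> N}" using x y e sf_add[OF K] sf_add[OF N] unfolding embedding_over_def by auto
    show "x * y \<in> {x \<in> ?K. \<sigma> x \<in> N}" using x y e sf_mult[OF K] sf_mult[OF N] unfolding embedding_over_def by auto
    show "x - y \<in> {x \<in> ?K. \<sigma> x \<in> N}" using x y emb_diff[OF e K] sf_diff[OF K] sf_diff[OF N] by auto
  next
    fix x assume x: "x \<in> {x \<in> ?K. \<sigma> x \<in> N}"
    show "inverse x \<in> {x \<in> ?K. \<sigma> x \<in> N}" using x emb_inv[OF e K] sf_inv[OF K] sf_inv[OF N] by auto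
  qed
  moreover have "X \<subseteq> S" using X gen_field_sup[of X] unfolding S_def by auto
  ultimately have "?K \<subseteq> S" by (rule gen_field_min)
  then show ?thesis unfolding S_def by auto
qed

lemma poly_in: "subfield K \<Longrightarrow> x \<in> K \<Longrightarrow> \<forall>i. coeff p i \<in> K \<Longrightarrow> poly p x \<in> K"
proof (induction p)
  case 0 then show ?case by (simp add: sf_0)
next
  case (pCons a p)
  have "\<forall>i. coeff p i \<in> K" using pCons.prems(3) by (metis coeff_pCons_Suc)
  moreover have "a \<in> K" using pCons.prems(3) by (metis coeff_pCons_0)
  ultimately show ?case using pCons by (simp add: sf_add sf_mult)
qed

lemma emb_poly:
  assumes e: "embedding_over F K \<sigma>" and K: "subfield K" and FK: "F \<subseteq> K" and x: "x \<in> K"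
  shows "\<forall>i. coeff p i \<in> F \<Longrightarrow> \<sigma> (poly p x) = poly p (\<sigma> x)"
proof (induction p)
  case 0 then show ?case using emb_0[OF e K] by simp
next
  case (pCons a p)
  have cp: "\<forall>i. coeff p i \<in> F" using pCons.prems by (metis coeff_pCons_Suc)
  have aF: "a \<in> F" using pCons.prems by (metis coeff_pCons_0)
  have pK: "poly p x \<in> K" using poly_in[OF K x] cp FK by blast
  have "\<sigma> (a + x * poly p x) = \<sigma> a + \<sigma> x * \<sigma> (poly p x)"
    using e aF FK x pK sf_mult[OF K x pK] unfolding embedding_over_def by auto
  then show ?case using pCons.IH[OF cp] e aF unfolding embedding_over_def by simp
qed

lemma quartic_roots:
  fixes A B C w x c :: "'a::field"
  assumes A: "A \<noteq> 0" and w: "w \<noteq> 0" and hw: "A*w^4 + B*w^2 + C = 0"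
    and hx: "A*x^4 + B*x^2 + C = 0" and hc: "A * c^2 = C"
  shows "x = w \<or> x = -w \<or> x = c/w \<or> x = -(c/w)"
proof -
  have "A * ((x-w)*(x+w)*(x*w-c)*(x*w+c)) = w^2 * (A*x^4+B*x^2+C) - x^2*(A*w^4+B*w^2+C)"
    using hc[symmetric] by (simp add: algebra_simps power2_eq_square power4_eq_xxxx)
  then have "(x-w)*(x+w)*(x*w-c)*(x*w+c) = 0" using hw hx A by simp
  then have "x = w \<or> x = -w \<or> x*w = c \<or> x*w = -c"
    by (auto simp: eq_neg_iff_add_eq_0 add.commute)
  then show ?thesis using w by (auto simp: field_simps)
qed


lemma coeff3_in: "subfield k \<Longrightarrow> a0 \<in> k \<Longrightarrow> a1 \<in> k \<Longrightarrow> a2 \<in> k \<Longrightarrow> \<forall>i. coeff [:a0, a1, a2:] i \<in> k"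
  by (auto simp: coeff_pCons sf_0 split: nat.split)

lemma coeff5_in: "subfield k \<Longrightarrow> a0 \<in> k \<Longrightarrow> a1 \<in> k \<Longrightarrow> a2 \<in> k \<Longrightarrow> a3 \<in> k \<Longrightarrow> a4 \<in> k
   \<Longrightarrow> \<forall>i. coeff [:a0, a1, a2, a3, a4:] i \<in> k"
  by (auto simp: coeff_pCons sf_0 split: nat.split)

lemma trans_nz:
  assumes "transcendental_over k x" "subfield k" "a0 \<in> k" "a1 \<in> k" "a2 \<in> k" "a1 \<noteq> 0 \<or> a2 \<noteq> 0"
  shows "a0 + x * (a1 + x * a2) \<noteq> 0"
proof -
  have "[:a0, a1, a2:] \<noteq> 0" using assms(6) by auto
  then have "poly [:a0, a1, a2:] x \<noteq> 0"
    using assms(1) coeff3_in[OF assms(2-5)] unfolding transcendental_over_def by blast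
  then show ?thesis by simp
qed

theorem proposition3p5:
  fixes k :: "'a :: {alg_closed_field, field_char_0} set"
    and a b T1 w :: 'a
  assumes k_field: "subfield k"
    and root5: "\<exists>\<zeta>\<in>k. \<zeta> ^ 5 = 1 \<and> \<zeta> \<noteq> 1"
    and ab: "a \<in> k" "b \<in> k"
    and smooth: "smooth_threefold a b"
    and T1_trans: "transcendental_over k T1"
    and curve: "curveD a b T1 w = 0"
    and deg4: "\<forall>p. p \<noteq> 0 \<longrightarrow> (\<forall>i. coeff p i \<in> gen_field (k \<union> {T1})) \<longrightarrow>
                   degree p < 4 \<longrightarrow> poly p w \<noteq> 0"
    and not_galois: "\<not> galois_ext (gen_field (k \<union> {T1})) (gen_field (k \<union> {T1, w}))"
  shows "\<exists>t. t ^ 2 = (T1 - 2) / (5 * T1 - b - 2) \<and>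
             t \<notin> gen_field (k \<union> {T1, w}) \<and>
             galois_closure (gen_field (k \<union> {T1})) (gen_field (k \<union> {T1, w}))
               = gen_field (k \<union> {T1, w, t})"
proof -
  define F where "F = gen_field (k \<union> {T1})"
  define K where "K = gen_field (k \<union> {T1, w})"
  have Fs: "subfield F" and Ks: "subfield K" unfolding F_def K_def by (rule gen_field_subfield)+
  have kF: "k \<subseteq> F" and T1F: "T1 \<in> F" unfolding F_def using gen_field_sup[of "k \<union> {T1}"] by auto
  have kK: "k \<subseteq> K" and T1K: "T1 \<in> K" and wK: "w \<in> K" unfolding K_def using gen_field_sup[of "k \<union> {T1, w}"] by auto
  have FK: "F \<subseteq> K" unfolding F_def by (rule gen_field_min[OF Ks]) (use kK T1K in auto)
  have bF: "b \<in> F" and aF: "a \<in> F" using ab kF by auto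
  define A where "A = -2 - b + 5*T1"
  define Bc where "Bc = a + b + 4 - 10*T1 + 5*T1^3"
  define P where "P = T1^2 + T1 - 1"
  define C where "C = (T1 - 2) * P^2"
  have A0: "A \<noteq> 0"
  proof -
    have "(-2 - b) + T1 * (5 + T1 * 0) \<noteq> 0"
      by (rule trans_nz[OF T1_trans k_field]) (use k_field ab in \<open>auto intro: sf_all\<close>)
    then show ?thesis unfolding A_def by (simp add: algebra_simps)
  qed
  have T2: "T1 - 2 \<noteq> 0"
  proof -
    have "(-2) + T1 * (1 + T1 * 0) \<noteq> 0"
      by (rule trans_nz[OF T1_trans k_field]) (use k_field ab in \<open>auto intro: sf_all\<close>)
    then show ?thesis by (simp add: algebra_simps)
  qed
  have P0: "P \<noteq> 0"
  proof -
    have "(-1) + T1 * (1 + T1 * 1) \<noteq> 0"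
      by (rule trans_nz[OF T1_trans k_field]) (use k_field ab in \<open>auto intro: sf_all\<close>)
    then show ?thesis unfolding P_def by (simp add: algebra_simps power2_eq_square)
  qed
  have C0: "C \<noteq> 0" unfolding C_def using T2 P0 by simp
  have curve_eq: "\<And>x. curveD a b T1 x = A*x^4 + Bc*x^2 + C"
    unfolding curveD_def A_def Bc_def C_def P_def by (simp add: algebra_simps)
  define Q where "Q = [:C, 0, Bc, 0, A:]"
  have polyQ: "\<And>x. poly Q x = A*x^4 + Bc*x^2 + C"
    unfolding Q_def by (simp add: algebra_simps power2_eq_square power4_eq_xxxx)
  have QF: "\<forall>i. coeff Q i \<in> F" unfolding Q_def
    by (rule coeff5_in[OF Fs]) (unfold A_def Bc_def C_def P_def, use Fs aF bF T1F in \<open>auto intro!: sf_all\<close>)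
  have hw: "A*w^4 + Bc*w^2 + C = 0" using curve curve_eq by simp
  have w0: "w \<noteq> 0" using hw C0 by auto
  obtain t where ht: "t ^ 2 = (T1 - 2) / (5 * T1 - b - 2)" using nth_root_exists[of 2] by auto
  define c where "c = P * t"
  have hc: "A * c^2 = C"
  proof -
    have "5 * T1 - b - 2 = A" unfolding A_def by simp
    then have At: "A * t^2 = T1 - 2" using ht A0 by (simp add: field_simps)
    have "A * c^2 = P^2 * (A * t^2)" unfolding c_def by (simp add: power_mult_distrib algebra_simps)
    then show ?thesis using At unfolding C_def by (simp add: algebra_simps)
  qed
  have roots: "\<And>x. A*x^4 + Bc*x^2 + C = 0 \<Longrightarrow> x = w \<or> x = -w \<or> x = c/w \<or> x = -(c/w)"
    using quartic_roots[OF A0 w0 hw _ hc] by blast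
  have emb_root: "\<And>\<sigma>. embedding_over F K \<sigma> \<Longrightarrow> A*(\<sigma> w)^4 + Bc*(\<sigma> w)^2 + C = 0"
  proof -
    fix \<sigma> assume e: "embedding_over F K \<sigma>"
    have "\<sigma> (poly Q w) = poly Q (\<sigma> w)" using emb_poly[OF e Ks FK wK QF] .
    then show "A*(\<sigma> w)^4 + Bc*(\<sigma> w)^2 + C = 0" using hw polyQ emb_0[OF e Ks] by simp
  qed
  have emb_gen: "\<And>\<sigma> N. embedding_over F K \<sigma> \<Longrightarrow> subfield N \<Longrightarrow> k \<subseteq> N \<Longrightarrow> T1 \<in> N \<Longrightarrow> \<sigma> w \<in> N
      \<Longrightarrow> \<sigma> ` K \<subseteq> N"
  proof -
    fix \<sigma> N assume e: "embedding_over F K \<sigma>" and N: "subfield N" "k \<subseteq> N" "T1 \<in> N" "\<sigma> w \<in> N"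
    have fx: "\<And>x. x \<in> F \<Longrightarrow> \<sigma> x = x" using e unfolding embedding_over_def by blast
    show "\<sigma> ` K \<subseteq> N" unfolding K_def
    proof (rule emb_into)
      show "embedding_over F (gen_field (k \<union> {T1, w})) \<sigma>" using e unfolding K_def .
      show "subfield N" by fact
      show "\<forall>x\<in>k \<union> {T1, w}. \<sigma> x \<in> N"
      proof
        fix x assume x: "x \<in> k \<union> {T1, w}"
        show "\<sigma> x \<in> N"
        proof (cases "x = w")
          case True then show ?thesis using N by simp
        next
          case False then have "x \<in> F" "x \<in> N" using x kF T1F N by auto
          then show ?thesis using fx by simp
        qed
      qed
    qed
  qed
  obtain \<sigma>0 where e0: "embedding_over F K \<sigma>0" and ns: "\<not> \<sigma>0 ` K \<subseteq> K"
    using not_galois unfolding galois_ext_def F_def K_def by blast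
  have s0: "\<sigma>0 w \<notin> K" using emb_gen[OF e0 Ks kK T1K] ns by blast
  have s0c: "\<sigma>0 w = c/w \<or> \<sigma>0 w = -(c/w)"
  proof -
    have n1: "\<sigma>0 w \<noteq> w" using s0 wK by auto
    have n2: "\<sigma>0 w \<noteq> -w" using s0 sf_uminus[OF Ks wK] by auto
    show ?thesis using roots[OF emb_root[OF e0]] n1 n2 by argo
  qed
  define M where "M = gen_field (k \<union> {T1, w, t})"
  have Ms: "subfield M" unfolding M_def by (rule gen_field_subfield)
  have kM: "k \<subseteq> M" and T1M: "T1 \<in> M" and wM: "w \<in> M" and tM: "t \<in> M"
    unfolding M_def using gen_field_sup[of "k \<union> {T1, w, t}"] by auto
  have PM: "P \<in> M" unfolding P_def using Ms T1M by (auto intro!: sf_all)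
  have cM: "c/w \<in> M" unfolding c_def using Ms PM tM wM by (auto intro!: sf_divide sf_mult)
  have tK: "t \<notin> K"
  proof
    assume "t \<in> K"
    then have "c/w \<in> K" unfolding c_def P_def using Ks T1K wK by (auto intro!: sf_all sf_divide)
    then have "\<sigma>0 w \<in> K" using s0c sf_uminus[OF Ks] by auto
    then show False using s0 by blast
  qed
  define U where "U = \<Union>{\<sigma> ` K | \<sigma>. embedding_over F K \<sigma>}"
  have GC: "galois_closure F K = gen_field U" unfolding galois_closure_def U_def by simp
  have Gs: "subfield (gen_field U)" by (rule gen_field_subfield)
  have idemb: "embedding_over F K id" unfolding embedding_over_def by simp
  have UG: "U \<subseteq> gen_field U" by (rule gen_field_sup)
  have "id ` K \<in> {\<sigma> ` K | \<sigma>. embedding_over F K \<sigma>}" using idemb by blast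
  then have "K \<subseteq> U" unfolding U_def by auto
  then have KU: "K \<subseteq> gen_field U" using UG by (rule subset_trans)
  have "\<sigma>0 ` K \<in> {\<sigma> ` K | \<sigma>. embedding_over F K \<sigma>}" using e0 by blast
  then have "\<sigma>0 ` K \<subseteq> U" unfolding U_def by auto
  then have sU: "\<sigma>0 w \<in> gen_field U" using UG wK by auto
  have cG: "c/w \<in> gen_field U"
    using s0c
  proof
    assume "\<sigma>0 w = - (c / w)"
    then have "c/w = - \<sigma>0 w" by simp
    then show ?thesis using sU sf_uminus[OF Gs] by simp
  qed (use sU in simp)
  have "c = (c/w) * w" using w0 by simp
  moreover have "(c/w) * w \<in> gen_field U" using KU wK by (intro sf_mult[OF Gs cG]) auto
  ultimately have "c \<in> gen_field U" by simp
  moreover have "P \<in> gen_field U" unfolding P_def using Gs KU T1K by (auto intro!: sf_all)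
  ultimately have "c / P \<in> gen_field U" using sf_divide[OF Gs] by auto
  moreover have "t = c / P" unfolding c_def using P0 by simp
  ultimately have tG: "t \<in> gen_field U" by simp
  have "gen_field U \<subseteq> M"
  proof (rule gen_field_min[OF Ms])
    show "U \<subseteq> M" unfolding U_def
    proof clarify
      fix x \<sigma> assume e: "embedding_over F K \<sigma>" and x: "x \<in> K"
      have "\<sigma> w \<in> M"
        using roots[OF emb_root[OF e]]
        by (elim disjE) (simp_all add: wM cM sf_uminus[OF Ms])
      then show "\<sigma> x \<in> M" using emb_gen[OF e Ms kM T1M] x by blast
    qed
  qed
  moreover have "M \<subseteq> gen_field U" unfolding M_def
    by (rule gen_field_min[OF Gs]) (use KU kK T1K wK tG in auto)
  ultimately have "galois_closure F K = M" using GC by (rule_tac equalityI) auto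
  then have "galois_closure (gen_field (k \<union> {T1})) (gen_field (k \<union> {T1, w}))
               = gen_field (k \<union> {T1, w, t})" unfolding F_def K_def M_def .
  moreover have "t \<notin> gen_field (k \<union> {T1, w})" using tK unfolding K_def .
  ultimately show ?thesis using ht by blast
qed

end
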